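(* $\mathsf{LDL}\equiv_{sW}\mathsf{C}_\mathbb{N}$.
   Context: A represented space is a pair $(X,\delta_X)$ with $\delta_X:\subseteq\mathbb{N}^\mathbb{N}\to X$ a partial surjection. A realizer of $f:\subseteq X\rightrightarrows Y$ is a partial $F$ with $\delta_Y F(p)\in f(\delta_X(p))$ for all $p\in\mathrm{dom}(f\circ\delta_X)$. $f\le_{sW}g$ if there are computable partial $H,K:\subseteq\mathbb{N}^\mathbb{N}\to\mathbb{N}^\mathbb{N}$ such that $HGK$ realizes $f$ for every realizer $G$ of $g$; $\equiv_{sW}$ is the induced equivalence. $\mathcal{A}_-(X)$ denotes closed subsets of $X$ represented by negative information (for $\mathbb N$: a name of $A$ enumerates $\mathbb N\setminus A$; for $2^\mathbb N$: a name enumerates words $w$ such that the union of the cylinders $w2^\mathbb N$ is $2^\mathbb N\setminus A$). $\mathsf C_\mathbb N:\subseteq\mathcal A_-(\mathbb N)\rightrightarrows\mathbb N$, $A\mapsto A$, defined on nonempty $A$. $\mu$ is the uniform measure on $2^\mathbb N$ with $\mu(w2^\mathbb N)=2^{-|w|}$. The Lebesgue Density Lemma problem is $\mathsf{LDL}:\subseteq\mathcal A_-(2^\mathbb N)\times\mathbb N\rightrightarrows\{0,1\}^*$, $(A,k)\mapsto\{w\in\{0,1\}^*:\mu(A\cap w2^\mathbb N)/2^{-|w|}\ge 1-2^{-k}\}$, with domain $\{(A,k):\mu(A)>0\}$. *)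

theory Defs
  imports "HOL-Probability.Probability"
begin

datatype rf = Zero | Succ | Proj nat | Query | Comp rf "rf list" | PrimRec rf rf | Mu rf

inductive rf_eval :: "(nat \<Rightarrow> nat) \<Rightarrow> rf \<Rightarrow> nat list \<Rightarrow> nat \<Rightarrow> bool" for p where
  zero: "rf_eval p Zero xs 0"
| succ: "rf_eval p Succ (x # xs) (Suc x)"
| proj: "i < length xs \<Longrightarrow> rf_eval p (Proj i) xs (xs ! i)"
| query: "rf_eval p Query (x # xs) (p x)"
| comp: "length ys = length gs \<Longrightarrow> (\<forall>i<length gs. rf_eval p (gs ! i) xs (ys ! i))
           \<Longrightarrow> rf_eval p f ys z \<Longrightarrow> rf_eval p (Comp f gs) xs z"
| prec0: "rf_eval p f xs y \<Longrightarrow> rf_eval p (PrimRec f g) (0 # xs) y"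
| precS: "rf_eval p (PrimRec f g) (n # xs) y \<Longrightarrow> rf_eval p g (n # y # xs) z
           \<Longrightarrow> rf_eval p (PrimRec f g) (Suc n # xs) z"
| mu: "rf_eval p f (n # xs) 0 \<Longrightarrow> (\<forall>m<n. \<exists>y. rf_eval p f (m # xs) (Suc y))
           \<Longrightarrow> rf_eval p (Mu f) xs n"

type_synonym baire = "nat \<Rightarrow> nat"

definition computable :: "(baire \<Rightarrow> baire option) \<Rightarrow> bool" where
  "computable F \<longleftrightarrow> (\<exists>t. \<forall>p q. F p = Some q \<longrightarrow> (\<forall>n. rf_eval p t [n] (q n)))"

text \<open>A representation is a partial map delta :: baire => 'a option; a multi-valued problem
  is given by its domain D and its value map f (f x = set of admissible outputs).\<close>
definition realizes ::
  "(baire \<Rightarrow> 'a option) \<Rightarrow> (baire \<Rightarrow> 'b option) \<Rightarrow> 'a set \<Rightarrow> ('a \<Rightarrow> 'b set)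
   \<Rightarrow> (baire \<Rightarrow> baire option) \<Rightarrow> bool" where
  "realizes dX dY D f G \<longleftrightarrow>
     (\<forall>p x. dX p = Some x \<and> x \<in> D \<longrightarrow> (\<exists>q y. G p = Some q \<and> dY q = Some y \<and> y \<in> f x))"

definition sW_le ::
  "(baire \<Rightarrow> 'a option) \<Rightarrow> (baire \<Rightarrow> 'b option) \<Rightarrow> 'a set \<Rightarrow> ('a \<Rightarrow> 'b set)
   \<Rightarrow> (baire \<Rightarrow> 'c option) \<Rightarrow> (baire \<Rightarrow> 'd option) \<Rightarrow> 'c set \<Rightarrow> ('c \<Rightarrow> 'd set) \<Rightarrow> bool" where
  "sW_le dX dY Df f dU dV Dg g \<longleftrightarrow>
     (\<exists>H K. computable H \<and> computable K \<and>
        (\<forall>G. realizes dU dV Dg g G \<longrightarrow>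
             realizes dX dY Df f (\<lambda>p. Option.bind (K p) (\<lambda>q. Option.bind (G q) H))))"

definition sW_equiv ::
  "(baire \<Rightarrow> 'a option) \<Rightarrow> (baire \<Rightarrow> 'b option) \<Rightarrow> 'a set \<Rightarrow> ('a \<Rightarrow> 'b set)
   \<Rightarrow> (baire \<Rightarrow> 'c option) \<Rightarrow> (baire \<Rightarrow> 'd option) \<Rightarrow> 'c set \<Rightarrow> ('c \<Rightarrow> 'd set) \<Rightarrow> bool" where
  "sW_equiv dX dY Df f dU dV Dg g \<longleftrightarrow>
     sW_le dX dY Df f dU dV Dg g \<and> sW_le dU dV Dg g dX dY Df f"

text \<open>Bijective coding of binary words by natural numbers.\<close>
fun decode_word :: "nat \<Rightarrow> bool list" where
  "decode_word 0 = []"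
| "decode_word (Suc n) = even n # decode_word (n div 2)"

definition delta_nat :: "baire \<Rightarrow> nat option" where
  "delta_nat p = Some (p 0)"

definition delta_word :: "baire \<Rightarrow> bool list option" where
  "delta_word p = Some (decode_word (p 0))"

text \<open>Negative information for closed subsets of N: p i = Suc n enumerates n into the complement.\<close>
definition delta_AN :: "baire \<Rightarrow> nat set option" where
  "delta_AN p = Some {n. \<forall>i. p i \<noteq> Suc n}"

definition cyl :: "bool list \<Rightarrow> (nat \<Rightarrow> bool) set" where
  "cyl w = {x. \<forall>i<length w. x i = w ! i}"

text \<open>Negative information for closed subsets of Cantor space: p i = Suc c enumerates the word
  decode_word c; the named set is the complement of the union of the enumerated cylinders.\<close>
definition delta_AC :: "baire \<Rightarrow> (nat \<Rightarrow> bool) set option" where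
  "delta_AC p = Some (- (\<Union>i\<in>{i. p i \<noteq> 0}. cyl (decode_word (p i - 1))))"

definition delta_pair :: "(baire \<Rightarrow> 'a option) \<Rightarrow> (baire \<Rightarrow> 'b option) \<Rightarrow> baire \<Rightarrow> ('a \<times> 'b) option" where
  "delta_pair d1 d2 p =
     (case d1 (\<lambda>i. p (2 * i)) of None \<Rightarrow> None
      | Some x \<Rightarrow> (case d2 (\<lambda>i. p (2 * i + 1)) of None \<Rightarrow> None | Some y \<Rightarrow> Some (x, y)))"

definition cantor :: "(nat \<Rightarrow> bool) measure" where
  "cantor = Pi\<^sub>M UNIV (\<lambda>_. measure_pmf (bernoulli_pmf (1/2)))"

definition mu :: "(nat \<Rightarrow> bool) set \<Rightarrow> real" where
  "mu S = measure cantor S"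

definition CN_dom :: "nat set set" where
  "CN_dom = {A. A \<noteq> {}}"

definition CN :: "nat set \<Rightarrow> nat set" where
  "CN A = A"

definition LDL_dom :: "((nat \<Rightarrow> bool) set \<times> nat) set" where
  "LDL_dom = {(A, k). mu A > 0}"

definition LDL :: "(nat \<Rightarrow> bool) set \<times> nat \<Rightarrow> bool list set" where
  "LDL Ak = (case Ak of (A, k) \<Rightarrow>
     {w. mu (A \<inter> cyl w) / (1/2) ^ length w \<ge> 1 - (1/2) ^ k})"

end

theory Submission
  imports Defs
begin

definition cmp :: "nat \<Rightarrow> rf \<Rightarrow> (baire \<Rightarrow> nat list \<Rightarrow> nat) \<Rightarrow> bool" where
  "cmp k t F \<longleftrightarrow> (\<forall>p xs. length xs = k \<longrightarrow> rf_eval p t xs (F p xs))"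

definition comput :: "nat \<Rightarrow> (baire \<Rightarrow> nat list \<Rightarrow> nat) \<Rightarrow> bool" where
  "comput k F \<longleftrightarrow> (\<exists>t. cmp k t F)"

lemma comput_cong: "comput k F \<Longrightarrow> (\<And>p xs. length xs = k \<Longrightarrow> F p xs = G p xs) \<Longrightarrow> comput k G"
  unfolding comput_def cmp_def by metis

lemma comput_zero: "comput k (\<lambda>p xs. 0)"
  unfolding comput_def cmp_def by (blast intro: rf_eval.zero)

lemma comput_proj: "i < k \<Longrightarrow> comput k (\<lambda>p xs. xs ! i)"
  unfolding comput_def cmp_def by (blast intro: rf_eval.proj)

lemma comput_succ1: "comput 1 (\<lambda>p xs. Suc (xs ! 0))"
  unfolding comput_def cmp_def
proof (intro exI allI impI)
  fix p and xs :: "nat list" assume "length xs = 1"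
  then obtain x where "xs = [x]" by (cases xs) auto
  thus "rf_eval p Succ xs (Suc (xs ! 0))" using rf_eval.succ[of p x "[]"] by simp
qed

lemma comput_query1: "comput 1 (\<lambda>p xs. p (xs ! 0))"
  unfolding comput_def cmp_def
proof (intro exI allI impI)
  fix p and xs :: "nat list" assume "length xs = 1"
  then obtain x where "xs = [x]" by (cases xs) auto
  thus "rf_eval p Query xs (p (xs ! 0))" using rf_eval.query[of p x "[]"] by simp
qed

lemma comput_comp:
  assumes F: "comput (length Gs) F" and Gs: "\<forall>G\<in>set Gs. comput k G"
  shows "comput k (\<lambda>p xs. F p (map (\<lambda>G. G p xs) Gs))"
proof -
  obtain f where f: "cmp (length Gs) f F" using F unfolding comput_def by blast
  define tG where "tG G = (SOME t. cmp k t G)" for G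
  have tG: "cmp k (tG G) G" if "G \<in> set Gs" for G
    using Gs that unfolding tG_def comput_def by (metis someI_ex)
  let ?gs = "map tG Gs"
  have "cmp k (Comp f ?gs) (\<lambda>p xs. F p (map (\<lambda>G. G p xs) Gs))"
    unfolding cmp_def
  proof (intro allI impI)
    fix p and xs :: "nat list" assume len: "length xs = k"
    show "rf_eval p (Comp f ?gs) xs (F p (map (\<lambda>G. G p xs) Gs))"
    proof (rule rf_eval.comp)
      show "length (map (\<lambda>G. G p xs) Gs) = length ?gs" by simp
      show "\<forall>i<length ?gs. rf_eval p (?gs ! i) xs (map (\<lambda>G. G p xs) Gs ! i)"
        using tG len unfolding cmp_def by (auto simp: nth_mem)
      show "rf_eval p f (map (\<lambda>G. G p xs) Gs) (F p (map (\<lambda>G. G p xs) Gs))"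
        using f unfolding cmp_def by simp
    qed
  qed
  thus ?thesis unfolding comput_def by blast
qed

primrec precf :: "(baire \<Rightarrow> nat list \<Rightarrow> nat) \<Rightarrow> (baire \<Rightarrow> nat list \<Rightarrow> nat) \<Rightarrow> baire \<Rightarrow> nat \<Rightarrow> nat list \<Rightarrow> nat" where
  "precf F G p 0 ys = F p ys"
| "precf F G p (Suc n) ys = G p (n # precf F G p n ys # ys)"

lemma comput_prec0:
  assumes F: "comput k F" and G: "comput (Suc (Suc k)) G"
  shows "comput (Suc k) (\<lambda>p xs. precf F G p (hd xs) (tl xs))"
proof -
  obtain f where f: "cmp k f F" using F unfolding comput_def by blast
  obtain g where g: "cmp (Suc (Suc k)) g G" using G unfolding comput_def by blast
  have *: "rf_eval p (PrimRec f g) (n # ys) (precf F G p n ys)" if "length ys = k" for p n ys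
  proof (induction n)
    case 0 thus ?case using f that unfolding cmp_def by (auto intro: rf_eval.prec0)
  next
    case (Suc n) thus ?case using g that unfolding cmp_def by (auto intro: rf_eval.precS)
  qed
  have "cmp (Suc k) (PrimRec f g) (\<lambda>p xs. precf F G p (hd xs) (tl xs))"
    unfolding cmp_def
  proof (intro allI impI)
    fix p and xs :: "nat list" assume "length xs = Suc k"
    then obtain n ys where "xs = n # ys" "length ys = k" by (cases xs) auto
    thus "rf_eval p (PrimRec f g) xs (precf F G p (hd xs) (tl xs))" using * by simp
  qed
  thus ?thesis unfolding comput_def by blast
qed

lemma comput_prec:
  assumes F: "comput k F" and G: "comput (Suc (Suc k)) G"
    and H0: "\<And>p ys. length ys = k \<Longrightarrow> H p (0 # ys) = F p ys"
    and HS: "\<And>p n ys. length ys = k \<Longrightarrow> H p (Suc n # ys) = G p (n # H p (n # ys) # ys)"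
  shows "comput (Suc k) H"
proof (rule comput_cong[OF comput_prec0[OF F G]])
  fix p and xs :: "nat list" assume "length xs = Suc k"
  then obtain n ys where xs: "xs = n # ys" and len: "length ys = k" by (cases xs) auto
  have "precf F G p n ys = H p (n # ys)"
    by (induction n) (simp_all add: H0 HS len)
  thus "precf F G p (hd xs) (tl xs) = H p xs" using xs by simp
qed

lemma comput_mu0:
  assumes F: "comput (Suc k) F" and ex: "\<And>p xs. length xs = k \<Longrightarrow> \<exists>n. F p (n # xs) = 0"
  shows "comput k (\<lambda>p xs. LEAST n. F p (n # xs) = 0)"
proof -
  obtain f where f: "cmp (Suc k) f F" using F unfolding comput_def by blast
  have "cmp k (Mu f) (\<lambda>p xs. LEAST n. F p (n # xs) = 0)"
    unfolding cmp_def
  proof (intro allI impI)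
    fix p and xs :: "nat list" assume len: "length xs = k"
    let ?n = "LEAST n. F p (n # xs) = 0"
    have z: "F p (?n # xs) = 0" using ex[OF len] by (rule LeastI_ex)
    have nz: "\<exists>y. F p (m # xs) = Suc y" if "m < ?n" for m
      using not_less_Least[OF that] by (cases "F p (m # xs)") auto
    show "rf_eval p (Mu f) xs ?n"
    proof (rule rf_eval.mu)
      show "rf_eval p f (?n # xs) 0" using f len z unfolding cmp_def by (metis length_Cons)
      show "\<forall>m<?n. \<exists>y. rf_eval p f (m # xs) (Suc y)"
        using f len nz unfolding cmp_def by (metis length_Cons)
    qed
  qed
  thus ?thesis unfolding comput_def by blast
qed

lemma computable_of: "comput 1 F \<Longrightarrow> computable (\<lambda>p. Some (\<lambda>n. F p [n]))"
  unfolding comput_def cmp_def computable_def by force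

lemma comp1: "comput 1 F \<Longrightarrow> comput k G \<Longrightarrow> comput k (\<lambda>p xs. F p [G p xs])"
  using comput_comp[of "[G]" F k] by simp

lemma comp2: "comput 2 F \<Longrightarrow> comput k G1 \<Longrightarrow> comput k G2 \<Longrightarrow> comput k (\<lambda>p xs. F p [G1 p xs, G2 p xs])"
  using comput_comp[of "[G1,G2]" F k] by (simp add: numeral_2_eq_2)

lemma c_Suc: "comput k G \<Longrightarrow> comput k (\<lambda>p xs. Suc (G p xs))"
  using comp1[OF comput_succ1] by simp

lemma c_query: "comput k G \<Longrightarrow> comput k (\<lambda>p xs. p (G p xs))"
  using comp1[OF comput_query1] by simp

lemma c_constN: "comput k (\<lambda>p xs. c)"
proof (induction c)
  case 0 thus ?case by (rule comput_zero)
next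
  case (Suc c) thus ?case by (rule c_Suc)
qed

lemma c_const: "comput k (\<lambda>p xs. (c::nat))" by (rule c_constN)

lemma comput_prec':
  assumes "comput k F" and "comput (Suc (Suc k)) G"
    and "\<And>p ys. length ys = k \<Longrightarrow> H p (0 # ys) = F p ys"
    and "\<And>p n ys. length ys = k \<Longrightarrow> H p (Suc n # ys) = G p (n # H p (n # ys) # ys)"
    and "k' = Suc k"
  shows "comput k' H"
  using comput_prec[OF assms(1-4)] assms(5) by simp

lemma add2: "comput 2 (\<lambda>p xs. xs!0 + xs!1)"
proof (rule comput_prec'[where k=1 and F="\<lambda>p xs. xs!0" and G="\<lambda>p xs. Suc (xs!1)"])
  show "comput 1 (\<lambda>p xs. xs!0)" by (rule comput_proj) simp
  show "comput (Suc (Suc 1)) (\<lambda>p xs. Suc (xs!1))" by (rule c_Suc, rule comput_proj) simp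
qed auto

lemma c_add: "comput k G1 \<Longrightarrow> comput k G2 \<Longrightarrow> comput k (\<lambda>p xs. G1 p xs + G2 p xs)"
  using comp2[OF add2] by simp

lemma pred1: "comput 1 (\<lambda>p xs. xs!0 - 1)"
proof (rule comput_prec'[where k=0 and F="\<lambda>p xs. 0" and G="\<lambda>p xs. xs!0"])
  show "comput 0 (\<lambda>p xs. 0)" by (rule comput_zero)
  show "comput (Suc (Suc 0)) (\<lambda>p xs. xs!0)" by (rule comput_proj) simp
qed auto

lemma monus2: "comput 2 (\<lambda>p xs. xs!1 - xs!0)"
proof (rule comput_prec'[where k=1 and F="\<lambda>p xs. xs!0" and G="\<lambda>p xs. xs!1 - 1"])
  show "comput 1 (\<lambda>p xs. xs!0)" by (rule comput_proj) simp
  show "comput (Suc (Suc 1)) (\<lambda>p xs. xs!1 - 1)"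
    using comp1[OF pred1, of "Suc (Suc 1)" "\<lambda>p xs. xs!1"] comput_proj[of 1 "Suc (Suc 1)"] by simp
qed auto

lemma c_sub: "comput k G1 \<Longrightarrow> comput k G2 \<Longrightarrow> comput k (\<lambda>p xs. G1 p xs - G2 p xs)"
  using comp2[OF monus2, of k G2 G1] by simp

lemma mult2: "comput 2 (\<lambda>p xs. xs!0 * xs!1)"
proof (rule comput_prec'[where k=1 and F="\<lambda>p xs. 0" and G="\<lambda>p xs. xs!1 + xs!2"])
  show "comput 1 (\<lambda>p xs. 0)" by (rule comput_zero)
  show "comput (Suc (Suc 1)) (\<lambda>p xs. xs!1 + xs!2)" by (intro c_add comput_proj) auto
qed auto

lemma c_mult: "comput k G1 \<Longrightarrow> comput k G2 \<Longrightarrow> comput k (\<lambda>p xs. G1 p xs * G2 p xs)"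
  using comp2[OF mult2] by simp

lemma pow2_1: "comput 1 (\<lambda>p xs. 2 ^ (xs!0))"
proof (rule comput_prec'[where k=0 and F="\<lambda>p xs. 1" and G="\<lambda>p xs. xs!1 + xs!1"])
  show "comput 0 (\<lambda>p xs. 1)" by (rule c_const)
  show "comput (Suc (Suc 0)) (\<lambda>p xs. xs!1 + xs!1)" by (intro c_add comput_proj) auto
qed auto

lemma c_pow2: "comput k G \<Longrightarrow> comput k (\<lambda>p xs. 2 ^ G p xs)"
  using comp1[OF pow2_1] by simp

lemma c_eq: "comput k G1 \<Longrightarrow> comput k G2 \<Longrightarrow> comput k (\<lambda>p xs. of_bool (G1 p xs = G2 p xs))"
  apply (rule comput_cong[where F="\<lambda>p xs. 1 - ((G1 p xs - G2 p xs) + (G2 p xs - G1 p xs))"])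
  by (intro c_sub c_add c_const; assumption) auto

lemma c_le: "comput k G1 \<Longrightarrow> comput k G2 \<Longrightarrow> comput k (\<lambda>p xs. of_bool (G1 p xs \<le> G2 p xs))"
  apply (rule comput_cong[where F="\<lambda>p xs. 1 - (G1 p xs - G2 p xs)"])
  by (intro c_sub c_const; assumption) auto

lemma c_less: "comput k G1 \<Longrightarrow> comput k G2 \<Longrightarrow> comput k (\<lambda>p xs. of_bool (G1 p xs < G2 p xs))"
  apply (rule comput_cong[where F="\<lambda>p xs. 1 - (Suc (G1 p xs) - G2 p xs)"])
  by (intro c_sub c_Suc c_const; assumption) auto

lemma c_and: "comput k (\<lambda>p xs. of_bool (P p xs)) \<Longrightarrow> comput k (\<lambda>p xs. of_bool (Q p xs)) \<Longrightarrow>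
   comput k (\<lambda>p xs. of_bool (P p xs \<and> Q p xs))"
  apply (rule comput_cong[where F="\<lambda>p xs. of_bool (P p xs) * of_bool (Q p xs)"])
  by (intro c_mult; assumption) auto

lemma c_not: "comput k (\<lambda>p xs. of_bool (P p xs)) \<Longrightarrow> comput k (\<lambda>p xs. of_bool (\<not> P p xs))"
  apply (rule comput_cong[where F="\<lambda>p xs. 1 - of_bool (P p xs)"])
  by (intro c_sub c_const; assumption) auto

lemma c_neq: "comput k G1 \<Longrightarrow> comput k G2 \<Longrightarrow> comput k (\<lambda>p xs. of_bool (G1 p xs \<noteq> G2 p xs))"
  by (intro c_not c_eq)

lemma c_if: "comput k (\<lambda>p xs. of_bool (P p xs)) \<Longrightarrow> comput k G1 \<Longrightarrow> comput k G2 \<Longrightarrow>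
   comput k (\<lambda>p xs. if P p xs then G1 p xs else G2 p xs)"
  apply (rule comput_cong[where F="\<lambda>p xs. of_bool (P p xs) * G1 p xs + (1 - of_bool (P p xs)) * G2 p xs"])
  by (intro c_add c_mult c_sub c_const; assumption) auto

lemma mod2: "comput 2 (\<lambda>p xs. xs!0 mod xs!1)"
proof (rule comput_prec'[where k=1 and F="\<lambda>p xs. 0" and G="\<lambda>p xs. if Suc (xs!1) = xs!2 then 0 else Suc (xs!1)"])
  show "comput 1 (\<lambda>p xs. 0)" by (rule comput_zero)
  show "comput (Suc (Suc 1)) (\<lambda>p xs. if Suc (xs!1) = xs!2 then 0 else Suc (xs!1))"
    by (intro c_if c_eq c_Suc comput_proj c_const) auto
qed (auto simp: mod_Suc)

lemma c_mod: "comput k G1 \<Longrightarrow> comput k G2 \<Longrightarrow> comput k (\<lambda>p xs. G1 p xs mod G2 p xs)"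
  using comp2[OF mod2] by simp

lemma c_proj_tl: "Suc i < k \<Longrightarrow> comput k (\<lambda>p xs. tl xs ! i)"
  by (rule comput_cong[OF comput_proj[of "Suc i" k]]) (auto simp: nth_tl)

lemma c_proj_tl2: "Suc (Suc i) < k \<Longrightarrow> comput k (\<lambda>p xs. tl (tl xs) ! i)"
  by (rule comput_cong[OF comput_proj[of "Suc (Suc i)" k]]) (auto simp: nth_tl)

lemma c_sum:
  assumes F: "comput (Suc k) (\<lambda>p zs. F p (zs!0) (tl zs))" and N: "comput k N"
  shows "comput k (\<lambda>p xs. \<Sum>j<N p xs. F p j xs)"
proof -
  define H where "H p zs = (\<Sum>j<zs!0. F p j (tl zs))" for p zs
  have G: "comput (Suc (Suc k)) (\<lambda>p zs. zs!1 + F p (zs!0) (drop 2 zs))"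
  proof (rule c_add)
    show "comput (Suc (Suc k)) (\<lambda>p zs. zs!1)" by (rule comput_proj) simp
    have "comput (Suc (Suc k)) (\<lambda>p zs. (\<lambda>p zs. F p (zs!0) (tl zs)) p (map (\<lambda>G. G p zs)
            ((\<lambda>p zs. zs!0) # map (\<lambda>i p zs. zs!(i+2)) [0..<k])))"
      by (rule comput_comp) (use F in \<open>auto intro: comput_proj\<close>)
    thus "comput (Suc (Suc k)) (\<lambda>p zs. F p (zs!0) (drop 2 zs))"
    proof (rule comput_cong)
      fix p and zs :: "nat list" assume "length zs = Suc (Suc k)"
      hence "map (\<lambda>i. zs!(i+2)) [0..<k] = drop 2 zs"
        by (intro nth_equalityI) auto
      thus "(\<lambda>p zs. F p (zs!0) (tl zs)) p (map (\<lambda>G. G p zs) ((\<lambda>p zs. zs!0) # map (\<lambda>i p zs. zs!(i+2)) [0..<k]))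
            = F p (zs!0) (drop 2 zs)" by (simp add: comp_def)
    qed
  qed
  have HC: "comput (Suc k) H"
    by (rule comput_prec[OF comput_zero G]) (auto simp: H_def)
  have "comput k (\<lambda>p xs. H p (map (\<lambda>G. G p xs) (N # map (\<lambda>i p xs. xs!i) [0..<k])))"
    by (rule comput_comp) (use HC N in \<open>auto intro: comput_proj\<close>)
  thus ?thesis
  proof (rule comput_cong)
    fix p and xs :: "nat list" assume "length xs = k"
    hence "map (\<lambda>i. xs!i) [0..<k] = xs" by (intro nth_equalityI) auto
    thus "H p (map (\<lambda>G. G p xs) (N # map (\<lambda>i p xs. xs!i) [0..<k])) = (\<Sum>j<N p xs. F p j xs)"
      by (simp add: H_def comp_def)
  qed
qed

lemma c_ex:
  assumes F: "comput (Suc k) (\<lambda>p zs. of_bool (P p (zs!0) (tl zs)))" and N: "comput k N"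
  shows "comput k (\<lambda>p xs. of_bool (\<exists>j<N p xs. P p j xs))"
proof (rule comput_cong[OF c_less[OF c_const c_sum[OF F N], of 0]])
  fix p and xs :: "nat list"
  show "of_bool (0 < (\<Sum>j<N p xs. of_bool (P p j xs) :: nat)) = of_bool (\<exists>j<N p xs. P p j xs)"
    by (auto simp: card_gt_0_iff)
qed

lemma c_least:
  assumes F: "comput (Suc k) (\<lambda>p zs. of_bool (P p (zs!0) (tl zs)))"
    and ex: "\<And>p xs. length xs = k \<Longrightarrow> \<exists>n. P p n xs"
  shows "comput k (\<lambda>p xs. LEAST n. P p n xs)"
proof -
  have "comput k (\<lambda>p xs. LEAST n. (\<lambda>p zs. of_bool (\<not> P p (zs!0) (tl zs)) :: nat) p (n # xs) = 0)"
    by (rule comput_mu0[where F="\<lambda>p zs. of_bool (\<not> P p (zs!0) (tl zs)) :: nat"]) (use c_not[OF F] ex in auto)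
  thus ?thesis by (rule comput_cong) simp
qed

fun enc :: "bool list \<Rightarrow> nat" where
  "enc [] = 0"
| "enc (b # bs) = 2 * enc bs + (if b then 1 else 2)"

lemma dec_enc[simp]: "decode_word (enc w) = w"
proof (induction w)
  case (Cons b bs)
  show ?case
  proof (cases b)
    case True
    have "enc (b # bs) = Suc (2 * enc bs)" using True by simp
    thus ?thesis using Cons True by simp
  next
    case False
    have "enc (b # bs) = Suc (2 * enc bs + 1)" using False by simp
    thus ?thesis using Cons False by simp
  qed
qed simp

lemma enc_dec[simp]: "enc (decode_word c) = c"
proof (induction c rule: decode_word.induct)
  case (2 n)
  thus ?case by (cases "even n") (auto elim!: evenE oddE)
qed simp

lemma enc_inj: "enc v = enc w \<Longrightarrow> v = w"
  by (metis dec_enc)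

lemma enc_append: "enc (v @ r) = enc v + 2 ^ length v * enc r"
  by (induction v) (auto simp: algebra_simps)

lemma enc_bounds: "2 ^ length w \<le> enc w + 1 \<and> enc w + 1 < 2 ^ Suc (length w)"
  by (induction w) auto

lemma pow_between_unique:
  fixes x :: nat
  assumes "2 ^ a \<le> x" "x < 2 ^ Suc a" "2 ^ b \<le> x" "x < 2 ^ Suc b"
  shows "a = b"
proof (rule ccontr)
  assume "a \<noteq> b"
  then consider "a < b" | "b < a" by linarith
  thus False
  proof cases
    case 1 hence "2 ^ Suc a \<le> (2::nat) ^ b" by (intro power_increasing) auto
    thus False using assms by linarith
  next
    case 2 hence "2 ^ Suc b \<le> (2::nat) ^ a" by (intro power_increasing) auto
    thus False using assms by linarith
  qed
qed

lemma len_unique: "2 ^ L \<le> c + 1 \<Longrightarrow> c + 1 < 2 ^ Suc L \<Longrightarrow> length (decode_word c) = L"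
  using enc_bounds[of "decode_word c"] pow_between_unique[of L "c+1" "length (decode_word c)"] by simp

definition lenar :: "nat \<Rightarrow> nat" where
  "lenar c = (LEAST L. c + 2 \<le> 2 ^ Suc L)"

lemma lenar_eq: "lenar c = length (decode_word c)"
  unfolding lenar_def
proof (rule Least_equality)
  let ?L = "length (decode_word c)"
  have b: "2 ^ ?L \<le> c + 1" "c + 1 < 2 ^ Suc ?L" using enc_bounds[of "decode_word c"] by simp_all
  show "c + 2 \<le> 2 ^ Suc ?L" using b by simp
  fix m assume m: "c + 2 \<le> 2 ^ Suc m"
  show "?L \<le> m"
  proof (rule ccontr)
    assume "\<not> ?L \<le> m"
    hence "2 ^ Suc m \<le> (2::nat) ^ ?L" by (intro power_increasing) auto
    thus False using b m by linarith
  qed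
qed

definition prefar :: "nat \<Rightarrow> nat \<Rightarrow> bool" where
  "prefar a u \<longleftrightarrow> a \<le> u \<and> (u - a) mod 2 ^ lenar a = 0"

definition pre :: "bool list \<Rightarrow> bool list \<Rightarrow> bool" where
  "pre v u \<longleftrightarrow> (\<exists>r. u = v @ r)"

lemma prefar_iff: "prefar a u \<longleftrightarrow> pre (decode_word a) (decode_word u)"
proof
  let ?v = "decode_word a"
  assume "prefar a u"
  hence le: "a \<le> u" and md: "(u - a) mod 2 ^ length ?v = 0" unfolding prefar_def lenar_eq by auto
  define m where "m = (u - a) div 2 ^ length ?v"
  have "u - a = 2 ^ length ?v * m" using md unfolding m_def by (metis div_mult_mod_eq add_0_right mult.commute)
  hence "enc (?v @ decode_word m) = u" using le by (simp add: enc_append)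
  hence "decode_word u = ?v @ decode_word m" by (metis dec_enc)
  thus "pre ?v (decode_word u)" unfolding pre_def by blast
next
  let ?v = "decode_word a"
  assume "pre ?v (decode_word u)"
  then obtain r where r: "decode_word u = ?v @ r" unfolding pre_def by blast
  hence "u = a + 2 ^ length ?v * enc r" by (metis enc_dec enc_append)
  thus "prefar a u" unfolding prefar_def lenar_eq by simp
qed

definition cidx :: "nat \<Rightarrow> nat" where
  "cidx n = n + 1 - 2 ^ lenar n"

lemma cidx_inf: "\<exists>n\<ge>N. cidx n = c"
proof -
  let ?L = "N + c + 1"
  have cL: "c < 2 ^ ?L" using less_exp[of "N + c + 1"] by linarith
  let ?n = "2 ^ ?L - 1 + c"
  have pos: "(1::nat) \<le> 2 ^ ?L" by simp
  have "length (decode_word ?n) = ?L"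
    by (rule len_unique) (use cL pos in auto)
  hence "cidx ?n = c" unfolding cidx_def lenar_eq using pos by simp
  moreover have "N \<le> ?n" using less_exp[of "N + c + 1"] by linarith
  ultimately show ?thesis by blast
qed

lemma level_len: "j < 2 ^ s \<Longrightarrow> length (decode_word (2 ^ s - 1 + j)) = s"
proof (rule len_unique)
  have pos: "(1::nat) \<le> 2 ^ s" by simp
  assume "j < 2 ^ s"
  thus "2 ^ s \<le> 2 ^ s - 1 + j + 1" "2 ^ s - 1 + j + 1 < 2 ^ Suc s" using pos by auto
qed

lemma level_bij: "bij_betw (\<lambda>j. decode_word (2 ^ s - 1 + j)) {..<2 ^ s} {u. length u = s}"
proof (rule bij_betwI[where g="\<lambda>u. enc u + 1 - 2 ^ s"])
  show "(\<lambda>j. decode_word (2 ^ s - 1 + j)) \<in> {..<2 ^ s} \<rightarrow> {u. length u = s}"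
    using level_len by auto
  show "(\<lambda>u. enc u + 1 - 2 ^ s) \<in> {u. length u = s} \<rightarrow> {..<2 ^ s}"
  proof
    fix u :: "bool list" assume "u \<in> {u. length u = s}"
    hence "enc u + 1 < 2 * 2 ^ s" using enc_bounds[of u] by auto
    thus "enc u + 1 - 2 ^ s \<in> {..<2 ^ s}" by auto
  qed
  fix j assume "j \<in> {..<(2::nat) ^ s}"
  moreover have "(1::nat) \<le> 2 ^ s" by simp
  ultimately show "enc (decode_word (2 ^ s - 1 + j)) + 1 - 2 ^ s = j" by simp
next
  fix u :: "bool list" assume "u \<in> {u. length u = s}"
  hence "2 ^ s \<le> enc u + 1" using enc_bounds[of u] by auto
  thus "decode_word (2 ^ s - 1 + (enc u + 1 - 2 ^ s)) = u" by simp
qed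

lemma c_lenar: "comput k G \<Longrightarrow> comput k (\<lambda>p xs. lenar (G p xs))"
proof -
  have "comput 1 (\<lambda>p xs. LEAST L. xs!0 + 2 \<le> 2 ^ Suc L)"
  proof (rule c_least[where P="\<lambda>p L xs. xs!0 + 2 \<le> 2 ^ Suc L"])
    show "comput (Suc 1) (\<lambda>p zs. of_bool (tl zs ! 0 + 2 \<le> 2 ^ Suc (zs ! 0)))"
      by (intro c_le c_add c_proj_tl c_const c_pow2 c_Suc comput_proj) auto
    fix p and xs :: "nat list"
    show "\<exists>n. xs ! 0 + 2 \<le> 2 ^ Suc n"
      using less_exp[of "xs!0 + 2"] by (metis less_imp_le power_Suc2 le_less_trans less_imp_le_nat mult_2_right le_add2 trans_le_add1 order.strict_implies_order less_exp)
  qed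
  hence "comput 1 (\<lambda>p xs. lenar (xs!0))" by (rule comput_cong) (simp add: lenar_def)
  thus "comput k G \<Longrightarrow> comput k (\<lambda>p xs. lenar (G p xs))" using comp1 by fastforce
qed

lemma c_prefar: "comput k G1 \<Longrightarrow> comput k G2 \<Longrightarrow> comput k (\<lambda>p xs. of_bool (prefar (G1 p xs) (G2 p xs)))"
proof -
  assume a: "comput k G1" "comput k G2"
  have "comput k (\<lambda>p xs. of_bool (G1 p xs \<le> G2 p xs \<and> (G2 p xs - G1 p xs) mod 2 ^ lenar (G1 p xs) = 0))"
    by (intro c_and c_le c_eq c_mod c_sub c_pow2 c_lenar c_const a)
  thus ?thesis by (rule comput_cong) (simp add: prefar_def)
qed

lemma c_cidx: "comput k G \<Longrightarrow> comput k (\<lambda>p xs. cidx (G p xs))"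
proof -
  assume a: "comput k G"
  have "comput k (\<lambda>p xs. G p xs + 1 - 2 ^ lenar (G p xs))"
    by (intro c_add c_sub c_pow2 c_lenar c_const a)
  thus ?thesis by (rule comput_cong) (simp add: cidx_def)
qed

lemma space_cantor[simp]: "space cantor = UNIV"
  by (auto simp: cantor_def space_PiM PiE_def extensional_def)

lemma sets_cantor_comp: "{x. x i = b} \<in> sets cantor"
proof -
  have "(\<lambda>x. x i) \<in> measurable cantor (measure_pmf (bernoulli_pmf (1/2)))"
    unfolding cantor_def by (rule measurable_component_singleton) simp
  hence "(\<lambda>x. x i) -` {b} \<inter> space cantor \<in> sets cantor" by (rule measurable_sets) simp
  thus ?thesis by (simp add: vimage_def)
qed

lemma prob_cantor: "prob_space cantor"
  unfolding cantor_def by (rule prob_space_PiM) (rule prob_space_measure_pmf)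

lemma fin_cantor: "finite_measure cantor"
  using prob_cantor by (simp add: prob_space_def)

lemma cyl_sets[simp]: "cyl w \<in> sets cantor"
proof -
  have "cyl w = {x \<in> space cantor. \<forall>i\<in>{..<length w}. x i = w!i}" by (auto simp: cyl_def)
  also have "\<dots> \<in> sets cantor"
    apply (rule sets.sets_Collect_finite_All)
    using sets_cantor_comp apply simp
    apply simp done
  finally show ?thesis .
qed

lemma cyl_emb: "cyl w = prod_emb UNIV (\<lambda>_. measure_pmf (bernoulli_pmf (1/2))) {..<length w} (PiE {..<length w} (\<lambda>i. {w!i}))"
proof (rule set_eqI)
  fix x :: "nat \<Rightarrow> bool"
  have "x \<in> space (Pi\<^sub>M UNIV (\<lambda>_. measure_pmf (bernoulli_pmf (1/2))))"
    by (simp add: space_PiM)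
  thus "x \<in> cyl w \<longleftrightarrow> x \<in> prod_emb UNIV (\<lambda>_. measure_pmf (bernoulli_pmf (1/2))) {..<length w} (PiE {..<length w} (\<lambda>i. {w!i}))"
    unfolding prod_emb_def cyl_def by (simp add: restrict_PiE_iff Pi_iff Ball_def)
qed

lemma emeasure_cyl: "emeasure cantor (cyl w) = ennreal ((1/2) ^ length w)"
proof -
  have "cyl w = prod_emb UNIV (\<lambda>_. measure_pmf (bernoulli_pmf (1/2))) {..<length w} (PiE {..<length w} (\<lambda>i. {w!i}))"
    by (rule cyl_emb)
  hence "emeasure cantor (cyl w) = emeasure cantor (prod_emb UNIV (\<lambda>_. measure_pmf (bernoulli_pmf (1/2))) {..<length w} (PiE {..<length w} (\<lambda>i. {w!i})))" by simp
  also have "\<dots> = (\<Prod>i\<in>{..<length w}. emeasure (measure_pmf (bernoulli_pmf (1/2))) {w!i})"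
    unfolding cantor_def by (rule emeasure_PiM_emb) (auto simp: prob_space_measure_pmf)
  also have "\<dots> = (\<Prod>i\<in>{..<length w}. ennreal (1/2))"
    by (intro prod.cong refl) (simp add: emeasure_pmf_single pmf_bernoulli_True)
  also have "\<dots> = ennreal ((1/2)^length w)" by (simp only: prod_constant card_lessThan ennreal_power)
  finally show ?thesis .
qed

lemma mu_cyl: "mu (cyl w) = (1/2) ^ length w"
  using emeasure_cyl[of w] unfolding mu_def finite_measure.emeasure_eq_measure[OF fin_cantor] by simp

lemma mu_mono: "B \<in> sets cantor \<Longrightarrow> A \<subseteq> B \<Longrightarrow> mu A \<le> mu B"
  unfolding mu_def by (rule finite_measure.finite_measure_mono[OF fin_cantor])

lemma mu_nonneg: "0 \<le> mu A" unfolding mu_def by simp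

lemma sets_UN_cyl: "(\<Union>i\<in>(I::nat set). cyl (f i)) \<in> sets cantor"
  by (rule sets.countable_UN) auto

lemma sets_compl: "S \<in> sets cantor \<Longrightarrow> - S \<in> sets cantor"
  using sets.compl_sets[of S cantor] by (simp add: Compl_eq_Diff_UNIV)

lemma cyl_append: "x \<in> cyl (v @ r) \<longleftrightarrow> x \<in> cyl v \<and> (\<forall>i<length r. x (length v + i) = r ! i)"
proof
  assume H: "x \<in> cyl (v @ r)"
  show "x \<in> cyl v \<and> (\<forall>i<length r. x (length v + i) = r ! i)"
  proof
    show "x \<in> cyl v" unfolding cyl_def
    proof (intro CollectI allI impI)
      fix i assume "i < length v"
      thus "x i = v ! i" using H unfolding cyl_def by (auto simp: nth_append)
    qed
    show "\<forall>i<length r. x (length v + i) = r ! i"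
    proof (intro allI impI)
      fix i assume "i < length r"
      thus "x (length v + i) = r ! i" using H unfolding cyl_def by (auto simp: nth_append dest: spec[of _ "length v + i"])
    qed
  qed
next
  assume H: "x \<in> cyl v \<and> (\<forall>i<length r. x (length v + i) = r ! i)"
  show "x \<in> cyl (v @ r)" unfolding cyl_def
  proof (intro CollectI allI impI)
    fix i assume i: "i < length (v @ r)"
    show "x i = (v @ r) ! i"
    proof (cases "i < length v")
      case True thus ?thesis using H unfolding cyl_def by (simp add: nth_append)
    next
      case False thus ?thesis using H i spec[OF conjunct2[OF H], of "i - length v"] by (simp add: nth_append)
    qed
  qed
qed

lemma c_half: "comput k G \<Longrightarrow> comput k (\<lambda>p xs. G p xs div 2)"
proof -
  have "comput 1 (\<lambda>p xs. LEAST q. xs!0 < 2 * q + 2)"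
  proof (rule c_least[where P="\<lambda>p q xs. xs!0 < 2 * q + 2"])
    show "comput (Suc 1) (\<lambda>p zs. of_bool (tl zs ! 0 < 2 * zs ! 0 + 2))"
      by (intro c_less c_add c_mult c_proj_tl c_const comput_proj) auto
    fix p and xs :: "nat list"
    show "\<exists>q. xs!0 < 2 * q + 2" by (rule exI[of _ "xs!0"]) simp
  qed
  moreover have "(LEAST q. n < 2 * q + 2) = n div 2" for n :: nat
    by (auto intro: Least_equality)
  ultimately have "comput 1 (\<lambda>p xs. xs!0 div 2)" by (rule comput_cong)
  thus "comput k G \<Longrightarrow> comput k (\<lambda>p xs. G p xs div 2)" using comp1 by fastforce
qed

definition K2f :: "baire \<Rightarrow> nat list \<Rightarrow> nat" where
  "K2f p xs = (if xs!0 = 1 then 2 else if p (xs!0 div 2) = 0 then 0 else 3 * 2 ^ (p (xs!0 div 2) - 1) - 1)"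

definition H2f :: "baire \<Rightarrow> nat list \<Rightarrow> nat" where
  "H2f q xs = (LEAST j. \<not> prefar (2 ^ (j + 2) - 2) (q 0))"

lemma enc_repF0: "enc (replicate m False) + 2 = 2 ^ (m + 1)"
  by (induction m) auto

lemma enc_repF: "enc (replicate m False) = 2 ^ (m + 1) - 2"
  using enc_repF0[of m] by linarith

lemma enc_FT: "enc (replicate m False @ [True]) = 3 * 2 ^ m - 2"
proof -
  have "(2::nat) \<le> 2 ^ (m + 1)" by simp
  thus ?thesis by (simp add: enc_append enc_repF)
qed

lemma K2_comput: "comput 1 K2f"
proof -
  have "comput 1 (\<lambda>p xs. if xs!0 = 1 then 2 else if p (xs!0 div 2) = 0 then 0 else 3 * 2 ^ (p (xs!0 div 2) - 1) - 1)"
    by (intro c_if c_eq comput_proj c_const c_sub c_mult c_pow2 c_query c_half) auto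
  thus ?thesis by (rule comput_cong) (simp add: K2f_def)
qed

lemma pre_len: "pre v u \<Longrightarrow> length v \<le> length u"
  unfolding pre_def by auto

lemma H2_comput: "comput 1 H2f"
proof -
  have "comput 1 (\<lambda>p xs. LEAST j. \<not> prefar (2 ^ (j + 2) - 2) (p 0))"
  proof (rule c_least[where P="\<lambda>p j xs. \<not> prefar (2 ^ (j + 2) - 2) (p 0)"])
    show "comput (Suc 1) (\<lambda>p zs. of_bool (\<not> prefar (2 ^ (zs!0 + 2) - 2) (p 0)))"
      by (intro c_not c_prefar c_sub c_pow2 c_add comput_proj c_const c_query) auto
    fix p and xs :: "nat list"
    let ?j = "length (decode_word (p 0))"
    have "2 ^ (?j + 2) - 2 = enc (replicate (Suc ?j) False)" using enc_repF0[of "Suc ?j"] by simp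
    hence "\<not> prefar (2 ^ (?j + 2) - 2) (p 0)"
      by (metis prefar_iff dec_enc pre_len length_replicate Suc_n_not_le_n)
    thus "\<exists>j. \<not> prefar (2 ^ (j + 2) - 2) (p 0)" by blast
  qed
  thus ?thesis by (rule comput_cong) (simp add: H2f_def)
qed

lemma H2f_eq: "H2f q xs = (LEAST j. \<not> pre (replicate (Suc j) False) (decode_word (q 0)))"
proof -
  have "prefar (2 ^ (j + 2) - 2) (q 0) \<longleftrightarrow> pre (replicate (Suc j) False) (decode_word (q 0))" for j
  proof -
    have "2 ^ (j + 2) - 2 = enc (replicate (Suc j) False)" using enc_repF0[of "Suc j"] by simp
    thus ?thesis by (simp add: prefar_iff)
  qed
  thus ?thesis unfolding H2f_def by simp
qed

lemma cyl_FT_disj: "x \<in> cyl (replicate n False @ [True]) \<Longrightarrow> x \<in> cyl (replicate m False @ [True]) \<Longrightarrow> n = m"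
proof (rule ccontr)
  assume a: "x \<in> cyl (replicate n False @ [True])" "x \<in> cyl (replicate m False @ [True])" "n \<noteq> m"
  have xn: "x n = True" using a(1) unfolding cyl_def by (auto dest: spec[of _ n] simp: nth_append)
  have xm: "x m = True" using a(2) unfolding cyl_def by (auto dest: spec[of _ m] simp: nth_append)
  consider "n < m" | "m < n" using a(3) by linarith
  thus False
  proof cases
    case 1 thus False using a(2) xn unfolding cyl_def by (auto dest: spec[of _ n] simp: nth_append)
  next
    case 2 thus False using a(1) xm unfolding cyl_def by (auto dest: spec[of _ m] simp: nth_append)
  qed
qed

definition Bset :: "nat set \<Rightarrow> (nat \<Rightarrow> bool) set" where
  "Bset A = - (\<Union>m\<in>-A. cyl (replicate m False @ [True]))"

lemma Bset_sets: "Bset A \<in> sets cantor"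
  unfolding Bset_def by (intro sets_compl sets_UN_cyl)

lemma Bset_pos: "n \<in> A \<Longrightarrow> mu (Bset A) > 0"
proof -
  assume n: "n \<in> A"
  have "cyl (replicate n False @ [True]) \<subseteq> Bset A"
    unfolding Bset_def using n cyl_FT_disj by blast
  hence "mu (cyl (replicate n False @ [True])) \<le> mu (Bset A)" by (intro mu_mono Bset_sets)
  moreover have "mu (cyl (replicate n False @ [True])) > 0" by (simp add: mu_cyl)
  ultimately show ?thesis by linarith
qed

lemma lz_good:
  assumes w: "w \<in> LDL (Bset A, 2)"
  shows "(LEAST j. \<not> pre (replicate (Suc j) False) w) \<in> A"
proof (rule ccontr)
  define j where "j = (LEAST j. \<not> pre (replicate (Suc j) False) w)"
  assume jA: "j \<notin> A"
  have ex: "\<exists>j. \<not> pre (replicate (Suc j) False) w"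
    by (rule exI[of _ "length w"]) (metis pre_len length_replicate Suc_n_not_le_n)
  have nj: "\<not> pre (replicate (Suc j) False) w" unfolding j_def by (rule LeastI_ex[OF ex])
  have pj: "pre (replicate j False) w"
  proof (cases j)
    case 0 thus ?thesis unfolding pre_def by simp
  next
    case (Suc i)
    hence "i < j" by simp
    hence "pre (replicate (Suc i) False) w" unfolding j_def using not_less_Least by blast
    thus ?thesis using Suc by simp
  qed
  then obtain r where wr: "w = replicate j False @ r" unfolding pre_def by blast
  have out: "cyl (replicate j False @ [True]) \<inter> Bset A = {}" unfolding Bset_def using jA by blast
  have ratio: "mu (Bset A \<inter> cyl w) / (1/2) ^ length w \<ge> 1 - (1/2) ^ 2"
    using w unfolding LDL_def by simp
  have pos: "(0::real) < (1/2) ^ length w" by simp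
  have m3: "(1 - (1/2) ^ 2) * (1/2) ^ length w \<le> mu (Bset A \<inter> cyl w)"
    using ratio pos by (simp add: pos_le_divide_eq)
  have q34: "(1 - (1/2::real) ^ 2) = 3/4" by (simp add: power2_eq_square)
  show False
  proof (cases r)
    case Nil
    have "Bset A \<inter> cyl w \<subseteq> cyl (replicate (Suc j) False)"
    proof
      fix x assume x: "x \<in> Bset A \<inter> cyl w"
      have "x j \<noteq> True"
      proof
        assume "x j = True"
        hence "x \<in> cyl (replicate j False @ [True])" using x Nil wr by (simp add: cyl_append)
        thus False using x out by blast
      qed
      hence "x \<in> cyl (replicate j False @ [False])" using x Nil wr by (simp add: cyl_append)
      thus "x \<in> cyl (replicate (Suc j) False)" by (simp add: replicate_append_same)
    qed
    hence "mu (Bset A \<inter> cyl w) \<le> (1/2) ^ Suc j" using mu_mono[OF cyl_sets] mu_cyl by (metis length_replicate)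
    moreover have "length w = j" using wr Nil by simp
    ultimately have "mu (Bset A \<inter> cyl w) \<le> (1/2) * (1/2) ^ length w" by simp
    thus False using m3 pos unfolding q34 by linarith
  next
    case (Cons b r')
    show False
    proof (cases b)
      case False
      hence "w = replicate (Suc j) False @ r'" using wr Cons by (simp add: replicate_append_same[symmetric])
      thus False using nj unfolding pre_def by blast
    next
      case True
      hence "w = (replicate j False @ [True]) @ r'" using wr Cons by simp
      hence "cyl w \<subseteq> cyl (replicate j False @ [True])" using cyl_append by blast
      hence "Bset A \<inter> cyl w = {}" using out by blast
      hence "mu (Bset A \<inter> cyl w) = 0" by (simp add: mu_def)
      thus False using m3 pos unfolding q34 by simp
    qed
  qed
qed

lemma K2f_even: "K2f p [2*i] = (if p i = 0 then 0 else Suc (enc (replicate (p i - 1) False @ [True])))"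
proof (cases "p i")
  case 0 thus ?thesis by (simp add: K2f_def)
next
  case (Suc m)
  have "(1::nat) \<le> 2 ^ m" by simp
  hence "3 * 2 ^ m - 1 = Suc (3 * 2 ^ m - 2)" by linarith
  thus ?thesis using Suc by (simp add: K2f_def enc_FT)
qed

lemma K2f_name: "delta_pair delta_AC delta_nat (\<lambda>n. K2f p [n]) = Some (Bset {n. \<forall>i. p i \<noteq> Suc n}, 2)"
proof -
  let ?A = "{n. \<forall>i. p i \<noteq> Suc n}"
  have "(\<Union>i\<in>{i. K2f p [2*i] \<noteq> 0}. cyl (decode_word (K2f p [2*i] - 1))) =
        (\<Union>m\<in>-?A. cyl (replicate m False @ [True]))"
  proof (intro equalityI subsetI)
    fix x assume "x \<in> (\<Union>i\<in>{i. K2f p [2*i] \<noteq> 0}. cyl (decode_word (K2f p [2*i] - 1)))"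
    then obtain i where i: "K2f p [2*i] \<noteq> 0" "x \<in> cyl (decode_word (K2f p [2*i] - 1))" by blast
    then obtain m where m: "p i = Suc m" by (cases "p i") (auto simp: K2f_even)
    hence "x \<in> cyl (replicate m False @ [True])" using i by (simp add: K2f_even)
    moreover have "m \<in> - ?A" using m by auto
    ultimately show "x \<in> (\<Union>m\<in>-?A. cyl (replicate m False @ [True]))" by blast
  next
    fix x assume "x \<in> (\<Union>m\<in>-?A. cyl (replicate m False @ [True]))"
    then obtain m i where m: "p i = Suc m" "x \<in> cyl (replicate m False @ [True])" by auto
    thus "x \<in> (\<Union>i\<in>{i. K2f p [2*i] \<noteq> 0}. cyl (decode_word (K2f p [2*i] - 1)))"
      by (intro UN_I[of i]) (auto simp: K2f_even)
  qed
  moreover have "K2f p [1] = 2" by (simp add: K2f_def)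
  ultimately show ?thesis
    by (simp add: delta_pair_def delta_AC_def delta_nat_def Bset_def)
qed

lemma dir2: "sW_le delta_AN delta_nat CN_dom CN (delta_pair delta_AC delta_nat) delta_word LDL_dom LDL"
  unfolding sW_le_def
proof (rule exI[of _ "\<lambda>q. Some (\<lambda>n. H2f q [n])"], rule exI[of _ "\<lambda>p. Some (\<lambda>n. K2f p [n])"],
       intro conjI allI impI)
  show "computable (\<lambda>q. Some (\<lambda>n. H2f q [n]))" by (rule computable_of[OF H2_comput])
  show "computable (\<lambda>p. Some (\<lambda>n. K2f p [n]))" by (rule computable_of[OF K2_comput])
  fix G assume G: "realizes (delta_pair delta_AC delta_nat) delta_word LDL_dom LDL G"
  show "realizes delta_AN delta_nat CN_dom CN
          (\<lambda>p. Option.bind (Some (\<lambda>n. K2f p [n])) (\<lambda>q. Option.bind (G q) (\<lambda>q. Some (\<lambda>n. H2f q [n]))))"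
    unfolding realizes_def
  proof (intro allI impI)
    fix p A assume "delta_AN p = Some A \<and> A \<in> CN_dom"
    hence A: "A = {n. \<forall>i. p i \<noteq> Suc n}" and ne: "A \<noteq> {}" by (auto simp: delta_AN_def CN_dom_def)
    have dq: "delta_pair delta_AC delta_nat (\<lambda>n. K2f p [n]) = Some (Bset A, 2)" using K2f_name A by simp
    have dom: "(Bset A, 2) \<in> LDL_dom" using Bset_pos ne by (auto simp: LDL_dom_def)
    have "\<exists>q y. G (\<lambda>n. K2f p [n]) = Some q \<and> delta_word q = Some y \<and> y \<in> LDL (Bset A, 2)"
      using G[unfolded realizes_def, rule_format, OF conjI[OF dq dom]] .
    then obtain q' w where q': "G (\<lambda>n. K2f p [n]) = Some q'" "delta_word q' = Some w" "w \<in> LDL (Bset A, 2)"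
      by blast
    have "H2f q' [0] \<in> A" using lz_good[OF q'(3)] q'(2) by (simp add: H2f_eq delta_word_def)
    thus "\<exists>q y. Option.bind (Some (\<lambda>n. K2f p [n])) (\<lambda>q. Option.bind (G q) (\<lambda>q. Some (\<lambda>n. H2f q [n]))) = Some q \<and>
             delta_nat q = Some y \<and> y \<in> CN A"
      using q'(1) by (simp add: delta_nat_def CN_def)
  qed
qed

definition pfx :: "nat \<Rightarrow> (nat \<Rightarrow> bool) \<Rightarrow> bool list" where
  "pfx s x = map x [0..<s]"

lemma length_pfx[simp]: "length (pfx s x) = s" by (simp add: pfx_def)

lemma pre_iff_take: "pre w u \<longleftrightarrow> length w \<le> length u \<and> take (length w) u = w"
proof
  assume "pre w u" then obtain r where "u = w @ r" unfolding pre_def by blast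
  thus "length w \<le> length u \<and> take (length w) u = w" by simp
next
  assume a: "length w \<le> length u \<and> take (length w) u = w"
  have "u = take (length w) u @ drop (length w) u" by simp
  thus "pre w u" using a unfolding pre_def by metis
qed
lemma cyl_pfx: "length w \<le> s \<Longrightarrow> x \<in> cyl w \<longleftrightarrow> pre w (pfx s x)"
proof -
  assume ws: "length w \<le> s"
  have len: "length (take (length w) (pfx s x)) = length w" using ws by simp
  have nth: "take (length w) (pfx s x) ! i = x i" if "i < length w" for i
    using that ws by (simp add: pfx_def)
  have "take (length w) (pfx s x) = w \<longleftrightarrow> (\<forall>i<length w. x i = w ! i)"
    using len nth by (auto simp: list_eq_iff_nth_eq)
  thus ?thesis using ws unfolding pre_iff_take cyl_def by simp
qed

lemma cyl_pfx_eq: "length u = s \<Longrightarrow> x \<in> cyl u \<longleftrightarrow> pfx s x = u"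
  using cyl_pfx[of u s x] by (auto simp: pre_iff_take)

lemma finite_len: "finite {u :: bool list. length u = s}"
  using finite_lists_length_eq[of "UNIV :: bool set" s] by simp

lemma mu_pfx_sum:
  assumes S: "S \<in> sets cantor" and T: "T \<subseteq> {u. length u = s}"
  shows "mu (S \<inter> {x. pfx s x \<in> T}) = (\<Sum>u\<in>T. mu (S \<inter> cyl u))"
proof -
  have fin: "finite T" using T finite_len finite_subset by blast
  have eq: "S \<inter> {x. pfx s x \<in> T} = (\<Union>u\<in>T. S \<inter> cyl u)"
  proof (intro equalityI subsetI)
    fix x assume x: "x \<in> S \<inter> {x. pfx s x \<in> T}"
    hence "x \<in> cyl (pfx s x)" using cyl_pfx_eq[of "pfx s x" s x] by simp
    thus "x \<in> (\<Union>u\<in>T. S \<inter> cyl u)" using x by blast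
  next
    fix x assume "x \<in> (\<Union>u\<in>T. S \<inter> cyl u)"
    then obtain u where u: "u \<in> T" "x \<in> S" "x \<in> cyl u" by blast
    have "length u = s" using u T by blast
    hence "pfx s x = u" using u cyl_pfx_eq by blast
    thus "x \<in> S \<inter> {x. pfx s x \<in> T}" using u by simp
  qed
  have "mu (\<Union>u\<in>T. S \<inter> cyl u) = (\<Sum>u\<in>T. mu (S \<inter> cyl u))"
    unfolding mu_def
  proof (rule finite_measure.finite_measure_finite_Union[OF fin_cantor fin])
    show "(\<lambda>u. S \<inter> cyl u) ` T \<subseteq> sets cantor" using S by auto
    show "disjoint_family_on (\<lambda>u. S \<inter> cyl u) T"
      unfolding disjoint_family_on_def
    proof (intro ballI impI equalityI subsetI)
      fix u u' x assume u: "u \<in> T" "u' \<in> T" "u \<noteq> u'" and x: "x \<in> S \<inter> cyl u \<inter> (S \<inter> cyl u')"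
      have "length u = s" "length u' = s" using u T by auto
      hence "pfx s x = u" "pfx s x = u'" using x cyl_pfx_eq by blast+
      thus "x \<in> {}" using u by simp
    qed simp
  qed
  thus ?thesis using eq by simp
qed

lemma mu_pfx_card:
  assumes T: "T \<subseteq> {u. length u = s}"
  shows "mu {x. pfx s x \<in> T} = card T * (1/2) ^ s"
proof -
  have fin: "finite T" using T finite_len finite_subset by blast
  have "mu (UNIV \<inter> {x. pfx s x \<in> T}) = (\<Sum>u\<in>T. mu (UNIV \<inter> cyl u))"
    by (rule mu_pfx_sum[OF _ T]) (metis sets.top space_cantor)
  also have "\<dots> = (\<Sum>u\<in>T. (1/2) ^ s)"
  proof (rule sum.cong[OF refl])
    fix u assume "u \<in> T" hence "length u = s" using T by blast
    thus "mu (UNIV \<inter> cyl u) = (1/2) ^ s" by (simp add: mu_cyl)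
  qed
  also have "\<dots> = card T * (1/2) ^ s" by simp
  finally show ?thesis by (simp only: Int_UNIV_left)
qed

section \<open>The closed set named by an oracle and its approximations\<close>

definition vw :: "baire \<Rightarrow> nat \<Rightarrow> bool list" where
  "vw P i = decode_word (P (2*i) - 1)"

definition Aset :: "baire \<Rightarrow> (nat \<Rightarrow> bool) set" where
  "Aset P = - (\<Union>i\<in>{i. P (2*i) \<noteq> 0}. cyl (vw P i))"

definition Us :: "baire \<Rightarrow> nat \<Rightarrow> (nat \<Rightarrow> bool) set" where
  "Us P s = (\<Union>i\<in>{i. i < s \<and> P (2*i) \<noteq> 0 \<and> length (vw P i) \<le> s}. cyl (vw P i))"

lemma Us_sets: "Us P s \<in> sets cantor" unfolding Us_def by (rule sets_UN_cyl)
lemma Aset_sets: "Aset P \<in> sets cantor" unfolding Aset_def by (intro sets_compl sets_UN_cyl)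

lemma Us_mono: "s \<le> s' \<Longrightarrow> Us P s \<subseteq> Us P s'"
  unfolding Us_def by (intro UN_mono) auto

lemma Us_sub: "Us P s \<subseteq> - Aset P"
  unfolding Us_def Aset_def by auto

lemma Us_Union: "(\<Union>s. Us P s) = - Aset P"
proof
  show "(\<Union>s. Us P s) \<subseteq> - Aset P" using Us_sub by blast
  show "- Aset P \<subseteq> (\<Union>s. Us P s)"
  proof
    fix x assume "x \<in> - Aset P"
    then obtain i where i: "P (2*i) \<noteq> 0" "x \<in> cyl (vw P i)" unfolding Aset_def by blast
    hence "x \<in> Us P (Suc i + length (vw P i))" unfolding Us_def by (intro UN_I[of i]) auto
    thus "x \<in> (\<Union>s. Us P s)" by blast
  qed
qed

definition Cset :: "baire \<Rightarrow> nat \<Rightarrow> bool list \<Rightarrow> bool list set" where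
  "Cset P s w = {u. length u = s \<and> pre w u \<and> (\<exists>i<s. P (2*i) \<noteq> 0 \<and> pre (vw P i) u)}"

lemma Us_pfx: "x \<in> Us P s \<longleftrightarrow> (\<exists>i<s. P (2*i) \<noteq> 0 \<and> pre (vw P i) (pfx s x))"
proof
  assume "x \<in> Us P s"
  then obtain i where "i < s" "P (2*i) \<noteq> 0" "length (vw P i) \<le> s" "x \<in> cyl (vw P i)" unfolding Us_def by blast
  thus "\<exists>i<s. P (2*i) \<noteq> 0 \<and> pre (vw P i) (pfx s x)" using cyl_pfx by blast
next
  assume "\<exists>i<s. P (2*i) \<noteq> 0 \<and> pre (vw P i) (pfx s x)"
  then obtain i where i: "i < s" "P (2*i) \<noteq> 0" "pre (vw P i) (pfx s x)" by blast
  hence l: "length (vw P i) \<le> s" using pre_len by fastforce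
  hence "x \<in> cyl (vw P i)" using cyl_pfx i by blast
  thus "x \<in> Us P s" using i l unfolding Us_def by blast
qed

lemma Us_cyl_eq: "length w \<le> s \<Longrightarrow> Us P s \<inter> cyl w = {x. pfx s x \<in> Cset P s w}"
  unfolding Cset_def using Us_pfx cyl_pfx by auto

lemma mu_Us_cyl: "length w \<le> s \<Longrightarrow> mu (Us P s \<inter> cyl w) = card (Cset P s w) * (1/2) ^ s"
  unfolding Us_cyl_eq by (rule mu_pfx_card) (auto simp: Cset_def)

lemma Cset_empty: "s < length w \<Longrightarrow> Cset P s w = {}"
  unfolding Cset_def using pre_len by fastforce

definition cnt :: "baire \<Rightarrow> nat \<Rightarrow> nat \<Rightarrow> nat" where
  "cnt P s c = (\<Sum>j<2^s. of_bool (prefar c (2^s - 1 + j) \<and>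
       (\<exists>i<s. P (2*i) \<noteq> 0 \<and> prefar (P (2*i) - 1) (2^s - 1 + j))))"

lemma cnt_card: "cnt P s c = card (Cset P s (decode_word c))"
proof -
  let ?Q = "\<lambda>u. pre (decode_word c) u \<and> (\<exists>i<s. P (2*i) \<noteq> 0 \<and> pre (vw P i) u)"
  have "cnt P s c = (\<Sum>j<2^s. of_bool (?Q (decode_word (2^s - 1 + j))))"
    unfolding cnt_def vw_def by (simp add: prefar_iff)
  also have "\<dots> = (\<Sum>u\<in>{u. length u = s}. of_bool (?Q u))"
    by (rule sum.reindex_bij_betw[OF level_bij, where g="\<lambda>u. of_bool (?Q u)"])
  also have "\<dots> = card ({u. length u = s} \<inter> {u. ?Q u})"
    using finite_len by simp
  also have "{u. length u = s} \<inter> {u. ?Q u} = Cset P s (decode_word c)" by (auto simp: Cset_def)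
  finally show ?thesis .
qed

definition K1f :: "baire \<Rightarrow> nat list \<Rightarrow> nat" where
  "K1f P xs = (if 2 ^ (xs!0) < cnt P (xs!0) (cidx (xs!0)) * 2 ^ (P 1 + lenar (cidx (xs!0)))
               then Suc (cidx (xs!0)) else 0)"

lemma K1_comput: "comput 1 K1f"
proof -
  have "comput 1 (\<lambda>P xs. if (2::nat) ^ (xs!0) <
      (\<Sum>j<2^(xs!0). (of_bool (prefar (cidx (xs!0)) (2^(xs!0) - 1 + j) \<and>
         (\<exists>i<xs!0. P (2*i) \<noteq> 0 \<and> prefar (P (2*i) - 1) (2^(xs!0) - 1 + j))) :: nat))
       * 2 ^ (P 1 + lenar (cidx (xs!0)))
      then Suc (cidx (xs!0)) else 0)"
    by (intro c_if c_less c_pow2 c_mult c_sum c_add c_query c_const c_lenar c_cidx comput_proj c_Suc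
        c_and c_prefar c_sub c_proj_tl c_ex c_neq c_proj_tl2) auto
  thus ?thesis by (rule comput_cong) (simp add: K1f_def cnt_def)
qed

definition refuted :: "baire \<Rightarrow> nat \<Rightarrow> nat \<Rightarrow> bool" where
  "refuted P n c \<longleftrightarrow> 2 ^ n < cnt P n c * 2 ^ (P 1 + lenar c)"

lemma K1f_Suc: "K1f P [n] = Suc c \<longleftrightarrow> cidx n = c \<and> refuted P n c"
  unfolding K1f_def refuted_def by auto

lemma refuted_len: "refuted P n c \<Longrightarrow> length (decode_word c) \<le> n"
proof (rule ccontr)
  assume r: "refuted P n c" and "\<not> length (decode_word c) \<le> n"
  hence "cnt P n c = 0" by (simp add: cnt_card Cset_empty)
  thus False using r by (simp add: refuted_def)
qed

lemma ineq_aux: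
  fixes a b C :: real assumes "0 < a" "0 < b"
  shows "a < C * b \<longleftrightarrow> 1 / b < C / a"
proof -
  have "1 / b < C / a \<longleftrightarrow> (1 / b) * a < C" using assms(1) by (rule pos_less_divide_eq)
  also have "(1 / b) * a = a / b" by simp
  also have "a / b < C \<longleftrightarrow> a < C * b" using assms(2) by (rule pos_divide_less_eq) 
  finally show ?thesis by simp
qed

lemma refuted_mu:
  assumes L: "length (decode_word c) \<le> n"
  shows "refuted P n c \<longleftrightarrow> (1/2) ^ (P 1 + length (decode_word c)) < mu (Us P n \<inter> cyl (decode_word c))"
proof -
  let ?L = "length (decode_word c)" and ?k = "P 1" and ?C = "cnt P n c"
  have mu: "mu (Us P n \<inter> cyl (decode_word c)) = real ?C * (1/2) ^ n"
    using mu_Us_cyl[OF L] by (simp add: cnt_card)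
  have e1: "refuted P n c \<longleftrightarrow> (2::real) ^ n < real ?C * 2 ^ (?k + ?L)"
    unfolding refuted_def lenar_eq
    by (metis (mono_tags) of_nat_less_iff of_nat_mult of_nat_numeral of_nat_power)
  have e2: "(2::real) ^ n < real ?C * 2 ^ (?k + ?L) \<longleftrightarrow> 1 / 2 ^ (?k + ?L) < real ?C / (2::real) ^ n"
    by (rule ineq_aux) simp_all
  have e3: "1 / 2 ^ (?k + ?L) < real ?C / (2::real) ^ n \<longleftrightarrow> (1/2) ^ (?k + ?L) < real ?C * (1/2::real) ^ n"
  proof -
    have a: "(1/2::real) ^ (?k + ?L) = 1 / 2 ^ (?k + ?L)" by (rule power_one_over)
    have b: "real ?C * (1/2::real) ^ n = real ?C / 2 ^ n" by (simp add: power_one_over)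
    show ?thesis unfolding a b ..
  qed
  show ?thesis unfolding mu using e1 e2 e3 by blast
qed

lemma lim_Us_cyl: "(\<lambda>s. mu (Us P s \<inter> cyl w)) \<longlonglongrightarrow> mu (- Aset P \<inter> cyl w)"
proof -
  have "(\<lambda>s. measure cantor (Us P s \<inter> cyl w)) \<longlonglongrightarrow> measure cantor (\<Union>s. Us P s \<inter> cyl w)"
  proof (rule finite_measure.finite_Lim_measure_incseq[OF fin_cantor])
    show "range (\<lambda>s. Us P s \<inter> cyl w) \<subseteq> sets cantor" using Us_sets by auto
    show "incseq (\<lambda>s. Us P s \<inter> cyl w)" unfolding incseq_def using Us_mono by blast
  qed
  moreover have "(\<Union>s. Us P s \<inter> cyl w) = - Aset P \<inter> cyl w" using Us_Union by blast
  ultimately show ?thesis unfolding mu_def by simp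
qed

lemma surv_good:
  assumes surv: "\<forall>n. cidx n = c \<longrightarrow> \<not> refuted P n c"
  shows "decode_word c \<in> LDL (Aset P, P 1)"
proof -
  let ?w = "decode_word c" and ?k = "P 1"
  let ?b = "(1/2::real) ^ (?k + length ?w)"
  have bound: "mu (Us P s \<inter> cyl ?w) \<le> ?b" for s
  proof -
    obtain n where n: "n \<ge> s + length ?w" "cidx n = c" using cidx_inf by blast
    hence L: "length ?w \<le> n" by simp
    have "\<not> refuted P n c" using surv n(2) by blast
    hence "\<not> ?b < mu (Us P n \<inter> cyl ?w)" using refuted_mu[OF L, of P] by blast
    hence "mu (Us P n \<inter> cyl ?w) \<le> ?b" by linarith
    moreover have "mu (Us P s \<inter> cyl ?w) \<le> mu (Us P n \<inter> cyl ?w)"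
      using Us_mono[of s n P] n(1) by (intro mu_mono) (auto intro: Us_sets)
    ultimately show ?thesis by linarith
  qed
  have O: "mu (- Aset P \<inter> cyl ?w) \<le> ?b"
    using LIMSEQ_le_const2[OF lim_Us_cyl] bound by blast
  have "mu (cyl ?w - (- Aset P \<inter> cyl ?w)) = mu (cyl ?w) - mu (- Aset P \<inter> cyl ?w)"
    unfolding mu_def
    by (rule finite_measure.finite_measure_Diff[OF fin_cantor]) (auto intro!: sets.Int sets_compl Aset_sets)
  moreover have "cyl ?w - (- Aset P \<inter> cyl ?w) = Aset P \<inter> cyl ?w" by blast
  ultimately have eq: "mu (Aset P \<inter> cyl ?w) = (1/2) ^ length ?w - mu (- Aset P \<inter> cyl ?w)"
    by (simp add: mu_cyl)
  have pos: "(0::real) < (1/2) ^ length ?w" by simp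
  have "(1 - (1/2) ^ ?k) * (1/2) ^ length ?w \<le> mu (Aset P \<inter> cyl ?w)"
    using eq O by (simp add: algebra_simps power_add)
  hence "1 - (1/2) ^ ?k \<le> mu (Aset P \<inter> cyl ?w) / (1/2) ^ length ?w"
    using pos by (simp add: pos_le_divide_eq)
  thus ?thesis unfolding LDL_def by simp
qed

lemma density:
  assumes pos: "mu (Aset P) > 0"
  shows "\<exists>w. mu (- Aset P \<inter> cyl w) \<le> (1/2) ^ (k + length w)"
proof (rule ccontr)
  assume "\<not> ?thesis"
  hence big: "(1/2) ^ (k + length w) < mu (- Aset P \<inter> cyl w)" for w by (simp add: not_le)
  let ?a = "mu (Aset P)" and ?e = "(1/2::real) ^ k"
  have ea: "0 < ?e * ?a" using pos by simp
  have cyl0: "cyl [] = UNIV" by (simp add: cyl_def)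
  have lim: "(\<lambda>s. mu (Us P s)) \<longlonglongrightarrow> mu (- Aset P)"
    using lim_Us_cyl[of P "[]"] unfolding cyl0 by simp
  obtain N where N: "\<forall>n\<ge>N. norm (mu (Us P n) - mu (- Aset P)) < ?e * ?a"
    using LIMSEQ_D[OF lim ea] by blast
  define s where "s = N"
  have s: "mu (- Aset P) - mu (Us P s) < ?e * ?a" using N unfolding s_def by auto
  define T where "T = {u. length u = s \<and> \<not> (\<exists>i<s. P (2*i) \<noteq> 0 \<and> pre (vw P i) u)}"
  have Tsub: "T \<subseteq> {u. length u = s}" by (auto simp: T_def)
  have compl: "- Us P s = {x. pfx s x \<in> T}"
  proof (rule set_eqI)
    fix x show "x \<in> - Us P s \<longleftrightarrow> x \<in> {x. pfx s x \<in> T}"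
      unfolding T_def using Us_pfx[of x P s] by simp
  qed
  have Osets: "- Aset P \<in> sets cantor" by (intro sets_compl Aset_sets)
  have sum: "mu (- Aset P \<inter> {x. pfx s x \<in> T}) = (\<Sum>u\<in>T. mu (- Aset P \<inter> cyl u))"
    by (rule mu_pfx_sum[OF Osets Tsub])
  have "mu (- Aset P - Us P s) = mu (- Aset P) - mu (Us P s)"
    unfolding mu_def
    by (rule finite_measure.finite_measure_Diff[OF fin_cantor Osets Us_sets Us_sub])
  moreover have "- Aset P - Us P s = - Aset P \<inter> {x. pfx s x \<in> T}" using compl by blast
  ultimately have diff: "mu (- Aset P \<inter> {x. pfx s x \<in> T}) = mu (- Aset P) - mu (Us P s)" by simp
  have card: "mu {x. pfx s x \<in> T} = card T * (1/2) ^ s" by (rule mu_pfx_card[OF Tsub])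
  have "Aset P \<subseteq> {x. pfx s x \<in> T}" using Us_sub compl by blast
  moreover have "{x. pfx s x \<in> T} \<in> sets cantor" unfolding compl[symmetric] by (intro sets_compl Us_sets)
  ultimately have aT: "?a \<le> card T * (1/2) ^ s" using card mu_mono by metis
  have fin: "finite T" using Tsub finite_len finite_subset by blast
  have Tne: "T \<noteq> {}"
  proof
    assume "T = {}" thus False using aT pos by simp
  qed
  have "(\<Sum>u\<in>T. ?e * (1/2) ^ s) < (\<Sum>u\<in>T. mu (- Aset P \<inter> cyl u))"
  proof (rule sum_strict_mono[OF fin Tne])
    fix u assume "u \<in> T"
    hence "length u = s" by (simp add: T_def)
    thus "?e * (1/2) ^ s < mu (- Aset P \<inter> cyl u)" using big[of u] by (simp add: power_add)
  qed
  moreover have "(\<Sum>u\<in>T. ?e * (1/2) ^ s) = ?e * (card T * (1/2) ^ s)" by simp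
  moreover have "?e * ?a \<le> ?e * (card T * (1/2) ^ s)" using aT by (intro mult_left_mono) simp_all
  ultimately show False using s sum diff by linarith
qed

lemma survivor_exists:
  assumes pos: "mu (Aset P) > 0"
  shows "\<exists>c. \<forall>n. \<not> (cidx n = c \<and> refuted P n c)"
proof -
  obtain w where w: "mu (- Aset P \<inter> cyl w) \<le> (1/2) ^ (P 1 + length w)" using density[OF pos] by blast
  have "\<not> (cidx n = enc w \<and> refuted P n (enc w))" for n
  proof
    assume r: "cidx n = enc w \<and> refuted P n (enc w)"
    hence L: "length w \<le> n" using refuted_len[of P n "enc w"] by simp
    have "(1/2) ^ (P 1 + length w) < mu (Us P n \<inter> cyl w)"
      using r refuted_mu[of "enc w" n P] L by simp
    moreover have "mu (Us P n \<inter> cyl w) \<le> mu (- Aset P \<inter> cyl w)"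
      using Us_sub by (intro mu_mono) (auto intro!: sets.Int sets_compl Aset_sets)
    ultimately show False using w by linarith
  qed
  thus ?thesis by blast
qed

lemma dir1: "sW_le (delta_pair delta_AC delta_nat) delta_word LDL_dom LDL delta_AN delta_nat CN_dom CN"
  unfolding sW_le_def
proof (rule exI[of _ "\<lambda>p. Some (\<lambda>n. p ([n] ! 0))"], rule exI[of _ "\<lambda>P. Some (\<lambda>n. K1f P [n])"],
       intro conjI allI impI)
  show "computable (\<lambda>p. Some (\<lambda>n. p ([n] ! 0)))" by (rule computable_of[OF comput_query1])
  show "computable (\<lambda>P. Some (\<lambda>n. K1f P [n]))" by (rule computable_of[OF K1_comput])
  fix G assume G: "realizes delta_AN delta_nat CN_dom CN G"
  show "realizes (delta_pair delta_AC delta_nat) delta_word LDL_dom LDL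
          (\<lambda>P. Option.bind (Some (\<lambda>n. K1f P [n])) (\<lambda>q. Option.bind (G q) (\<lambda>p. Some (\<lambda>n. p ([n] ! 0)))))"
    unfolding realizes_def
  proof (intro allI impI)
    fix P x assume a: "delta_pair delta_AC delta_nat P = Some x \<and> x \<in> LDL_dom"
    have "delta_pair delta_AC delta_nat P = Some (Aset P, P 1)"
      by (simp add: delta_pair_def delta_AC_def delta_nat_def Aset_def vw_def)
    hence x: "x = (Aset P, P 1)" using a by simp
    hence pos: "mu (Aset P) > 0" using a by (simp add: LDL_dom_def)
    let ?S = "{c. \<forall>i. K1f P [i] \<noteq> Suc c}"
    have dS: "delta_AN (\<lambda>n. K1f P [n]) = Some ?S" by (simp add: delta_AN_def)
    have Sne: "?S \<in> CN_dom" using survivor_exists[OF pos] K1f_Suc by (auto simp: CN_dom_def)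
    have "\<exists>q y. G (\<lambda>n. K1f P [n]) = Some q \<and> delta_nat q = Some y \<and> y \<in> CN ?S"
      using G[unfolded realizes_def, rule_format, OF conjI[OF dS Sne]] .
    then obtain q' where q': "G (\<lambda>n. K1f P [n]) = Some q'" "q' 0 \<in> ?S"
      by (auto simp: delta_nat_def CN_def)
    have "\<forall>n. cidx n = q' 0 \<longrightarrow> \<not> refuted P n (q' 0)" using q'(2) K1f_Suc by blast
    hence good: "decode_word (q' 0) \<in> LDL x" using surv_good x by simp
    show "\<exists>q y. Option.bind (Some (\<lambda>n. K1f P [n])) (\<lambda>q. Option.bind (G q) (\<lambda>p. Some (\<lambda>n. p ([n] ! 0)))) = Some q \<and>
             delta_word q = Some y \<and> y \<in> LDL x"
      using q'(1) good by (simp add: delta_word_def)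
  qed
qed

theorem theorem11p2:
  shows "sW_equiv (delta_pair delta_AC delta_nat) delta_word LDL_dom LDL
                  delta_AN delta_nat CN_dom CN"
  unfolding sW_equiv_def using dir1 dir2 by blast

end
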